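(* Let $r\ge1$ and $s\ge2$. Let $P$ be the pattern of length $s(r+1)$ obtained by concatenating, for $i=1,2,\dots,s$ in order, the blocks $0^r\,i$ (i.e. $P=0^r\,1\,0^r\,2\,0^r\cdots 0^r\,(s-1)\,0^r\,s$), and let $P'$ be the pattern obtained by concatenating, for $i=1,\dots,s$ in order, the blocks $(i-1)^r\,i$ (i.e. $P'=0^r\,1\,1^r\,2\,2^r\cdots(s-1)^r\,s$), where $a^r$ denotes $r$ copies of $a$. Then the consecutive patterns $P$ and $P'$ are super-strongly Wilf equivalent.
   Context: An inversion sequence of length $n$ is an integer sequence $e=e_1e_2\dots e_n$ with $0\le e_i<i$ for all $i$; $\mathbf{I}_n$ denotes the set of these. The reduction of an integer word $w$ is obtained by replacing every occurrence of the $i$-th smallest distinct value of $w$ by $i-1$. For a pattern $p$ of length $m$, $\mathrm{Em}(p,e)$ is the set of positions $i$ such that the reduction of $e_i\dots e_{i+m-1}$ equals $p$. Two patterns are super-strongly Wilf equivalent if $|\{e\in\mathbf{I}_n:\mathrm{Em}(p,e)=T\}|=|\{e\in\mathbf{I}_n:\mathrm{Em}(p',e)=T\}|$ for all $n$ and all $T\subseteq[n]$. *)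

theory Defs
  imports Main
begin

text \<open>Inversion sequences of length n, as lists; entry at 1-based position i
  is xs ! (i-1) and must satisfy 0 \<le> e_i < i.\<close>
definition inv_seqs :: "nat \<Rightarrow> nat list set" where
  "inv_seqs n = {e. length e = n \<and> (\<forall>j<n. e ! j < Suc j)}"

definition reduct :: "nat list \<Rightarrow> nat list" where
  "reduct w = map (\<lambda>v. card {u \<in> set w. u < v}) w"

definition Em :: "nat list \<Rightarrow> nat list \<Rightarrow> nat set" where
  "Em p e = {i. 1 \<le> i \<and> i + length p \<le> length e + 1 \<and>
               reduct (take (length p) (drop (i - 1) e)) = p}"

definition super_strongly_wilf_equiv :: "nat list \<Rightarrow> nat list \<Rightarrow> bool" where
  "super_strongly_wilf_equiv p p' \<longleftrightarrow>
     (\<forall>n T. T \<subseteq> {1..n} \<longrightarrow>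
        card {e \<in> inv_seqs n. Em p e = T} = card {e \<in> inv_seqs n. Em p' e = T})"

end

theory Submission
  imports Defs
begin


definition occ :: "(nat \<Rightarrow> nat) \<Rightarrow> nat \<Rightarrow> (nat \<Rightarrow> nat) \<Rightarrow> nat \<Rightarrow> bool" where
  "occ p m w i \<longleftrightarrow> (\<forall>a<m. \<forall>b<m. w (i+a) < w (i+b) \<longleftrightarrow> p a < p b)"

lemma card_image_eqrel:
  assumes "finite J" "\<forall>j\<in>J. \<forall>k\<in>J. (f j = f k \<longleftrightarrow> g j = g k)"
  shows "card (f ` J) = card (g ` J)"
proof -
  define F where "F x = f (SOME j. j \<in> J \<and> g j = x)" for x
  have "bij_betw F (g ` J) (f ` J)"
  proof (rule bij_betwI')
    fix x y assume "x \<in> g ` J" "y \<in> g ` J"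
    then obtain j k where jk: "j\<in>J" "x = g j" "k\<in>J" "y = g k" by auto
    have sj: "(SOME j'. j' \<in> J \<and> g j' = x) \<in> J \<and> g (SOME j'. j' \<in> J \<and> g j' = x) = x"
      by (rule someI[of _ j]) (use jk in auto)
    have sk: "(SOME j'. j' \<in> J \<and> g j' = y) \<in> J \<and> g (SOME j'. j' \<in> J \<and> g j' = y) = y"
      by (rule someI[of _ k]) (use jk in auto)
    show "(F x = F y) = (x = y)" unfolding F_def using sj sk assms(2) by metis
  next
    fix x assume "x \<in> g ` J"
    then obtain j where jk: "j\<in>J" "x = g j" by auto
    have sj: "(SOME j'. j' \<in> J \<and> g j' = x) \<in> J \<and> g (SOME j'. j' \<in> J \<and> g j' = x) = x"
      by (rule someI[of _ j]) (use jk in auto)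
    show "F x \<in> f ` J" unfolding F_def using sj by auto
  next
    fix y assume "y \<in> f ` J"
    then obtain j where jk: "j\<in>J" "y = f j" by auto
    have sj: "(SOME j'. j' \<in> J \<and> g j' = g j) \<in> J \<and> g (SOME j'. j' \<in> J \<and> g j' = g j) = g j"
      by (rule someI[of _ j]) (use jk in auto)
    show "\<exists>x\<in>g ` J. y = F x" unfolding F_def using sj jk assms(2) by (intro bexI[of _ "g j"]) auto
  qed
  thus ?thesis by (simp add: bij_betw_same_card)
qed

lemma card_less_mono:
  fixes w :: "nat list"
  assumes "x \<in> set w" "y \<in> set w"
  shows "card {u \<in> set w. u < x} < card {u \<in> set w. u < y} \<longleftrightarrow> x < y"
proof
  assume "x < y"
  then have "{u \<in> set w. u < x} \<subset> {u \<in> set w. u < y}" using assms by auto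
  then show "card {u \<in> set w. u < x} < card {u \<in> set w. u < y}" by (intro psubset_card_mono) auto
next
  assume h: "card {u \<in> set w. u < x} < card {u \<in> set w. u < y}"
  show "x < y"
  proof (rule ccontr)
    assume "\<not> x < y"
    then have "{u \<in> set w. u < y} \<subseteq> {u \<in> set w. u < x}" by auto
    then have "card {u \<in> set w. u < y} \<le> card {u \<in> set w. u < x}" by (intro card_mono) auto
    with h show False by simp
  qed
qed

lemma red_iff:
  fixes w :: "nat list" and pf :: "nat \<Rightarrow> nat"
  assumes len: "length w = m" and cl: "pf ` {..<m} = {..<K}"
  shows "reduct w = map pf [0..<m] \<longleftrightarrow> (\<forall>a<m. \<forall>b<m. w!a < w!b \<longleftrightarrow> pf a < pf b)"
proof
  assume h: "reduct w = map pf [0..<m]"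
  have pa: "pf a = card {u \<in> set w. u < w!a}" if "a < m" for a
  proof -
    have "reduct w ! a = map pf [0..<m] ! a" using h by simp
    then show ?thesis using that len by (simp add: reduct_def)
  qed
  show "\<forall>a<m. \<forall>b<m. w!a < w!b \<longleftrightarrow> pf a < pf b"
    using pa card_less_mono len by (metis nth_mem)
next
  assume iso: "\<forall>a<m. \<forall>b<m. w!a < w!b \<longleftrightarrow> pf a < pf b"
  have eq: "\<forall>j\<in>{j. j<m \<and> pf j < pf a}. \<forall>k\<in>{j. j<m \<and> pf j < pf a}. ((!) w j = (!) w k \<longleftrightarrow> pf j = pf k)" for a
    using iso by (metis linorder_neqE_nat mem_Collect_eq not_less_iff_gr_or_eq)
  show "reduct w = map pf [0..<m]"
  proof (rule nth_equalityI)
    show "length (reduct w) = length (map pf [0..<m])" using len by (simp add: reduct_def)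
  next
    fix a assume "a < length (reduct w)"
    then have a: "a < m" using len by (simp add: reduct_def)
    have s1: "{u \<in> set w. u < w!a} = (\<lambda>j. w!j) ` {j. j<m \<and> pf j < pf a}"
      using iso a len by (auto simp: in_set_conv_nth)
    have s2: "pf ` {j. j<m \<and> pf j < pf a} = {..<pf a}"
    proof -
      have "pf a < K" using cl a by auto
      have "pf ` {j. j<m \<and> pf j < pf a} = {v \<in> pf ` {..<m}. v < pf a}" by auto
      also have "\<dots> = {..<pf a}" using cl \<open>pf a < K\<close> by auto
      finally show ?thesis .
    qed
    have "card {u \<in> set w. u < w!a} = pf a"
      unfolding s1 using card_image_eqrel[OF _ eq[of a]] s2 by simp
    then show "reduct w ! a = map pf [0..<m] ! a" using a len by (simp add: reduct_def)
  qed
qed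




lemma card_sup_split:
  assumes finX: "finite X" and finU: "finite U" and sub: "\<forall>e\<in>X. E e \<subseteq> U" and TU: "T \<subseteq> U"
  shows "card {e\<in>X. T \<subseteq> E e} = card {e\<in>X. E e = T} + (\<Sum>V\<in>{V. T \<subset> V \<and> V \<subseteq> U}. card {e\<in>X. E e = V})"
proof -
  have fin: "finite {V. T \<subseteq> V \<and> V \<subseteq> U}" using finU by (rule finite_subset[rotated, OF finite_Pow_iff[THEN iffD2]]) auto
  have "{e\<in>X. T \<subseteq> E e} = (\<Union>V\<in>{V. T \<subseteq> V \<and> V \<subseteq> U}. {e\<in>X. E e = V})" using sub by auto
  moreover have "card (\<Union>V\<in>{V. T \<subseteq> V \<and> V \<subseteq> U}. {e\<in>X. E e = V}) = (\<Sum>V\<in>{V. T \<subseteq> V \<and> V \<subseteq> U}. card {e\<in>X. E e = V})"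
    using fin finX by (intro card_UN_disjoint) auto
  ultimately have "card {e\<in>X. T \<subseteq> E e} = (\<Sum>V\<in>{V. T \<subseteq> V \<and> V \<subseteq> U}. card {e\<in>X. E e = V})" by simp
  also have "{V. T \<subseteq> V \<and> V \<subseteq> U} = insert T {V. T \<subset> V \<and> V \<subseteq> U}" using TU by auto
  also have "(\<Sum>V\<in>insert T {V. T \<subset> V \<and> V \<subseteq> U}. card {e\<in>X. E e = V}) = card {e\<in>X. E e = T} + (\<Sum>V\<in>{V. T \<subset> V \<and> V \<subseteq> U}. card {e\<in>X. E e = V})"
    using fin by (subst sum.insert) (auto intro: finite_subset[rotated])
  finally show ?thesis .
qed

lemma moebius:
  assumes finX: "finite X" and finU: "finite U"
    and s1: "\<forall>e\<in>X. E1 e \<subseteq> U" and s2: "\<forall>e\<in>X. E2 e \<subseteq> U"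
    and G: "\<And>T. card {e\<in>X. T \<subseteq> E1 e} = card {e\<in>X. T \<subseteq> E2 e}"
  shows "T \<subseteq> U \<Longrightarrow> card {e\<in>X. E1 e = T} = card {e\<in>X. E2 e = T}"
proof (induction "card (U - T)" arbitrary: T rule: less_induct)
  case less
  have "(\<Sum>V\<in>{V. T \<subset> V \<and> V \<subseteq> U}. card {e\<in>X. E1 e = V}) = (\<Sum>V\<in>{V. T \<subset> V \<and> V \<subseteq> U}. card {e\<in>X. E2 e = V})"
  proof (rule sum.cong)
    fix V assume "V \<in> {V. T \<subset> V \<and> V \<subseteq> U}"
    then have "T \<subset> V" "V \<subseteq> U" by auto
    then have "card (U - V) < card (U - T)" using finU by (intro psubset_card_mono) auto
    then show "card {e\<in>X. E1 e = V} = card {e\<in>X. E2 e = V}" using less \<open>V \<subseteq> U\<close> by blast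
  qed simp
  then show ?case using card_sup_split[OF finX finU s1 less.prems] card_sup_split[OF finX finU s2 less.prems] G[of T]
    by simp
qed




lemma dm_lemma:
  fixes R :: nat assumes "c < R" shows "(K * R + c) div R = K" "(K * R + c) mod R = c"
  using assms by auto

definition pP :: "nat \<Rightarrow> nat \<Rightarrow> nat" where
  "pP r q = (if q mod Suc r = r then q div Suc r + 1 else 0)"
definition pQ :: "nat \<Rightarrow> nat \<Rightarrow> nat" where
  "pQ r q = (q + 1) div Suc r"

lemma P_list: "concat (map (\<lambda>i. replicate r 0 @ [i]) [1..<k+1]) = map (pP r) [0..<k * Suc r]"
proof (induction k)
  case 0 then show ?case by simp
next
  case (Suc k)
  have X: "map (pP r) [k * Suc r..<k * Suc r + Suc r] = replicate r 0 @ [Suc k]"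
  proof (rule nth_equalityI)
    fix j assume "j < length (map (pP r) [k * Suc r..<k * Suc r + Suc r])"
    then have j: "j < Suc r" by simp
    have "pP r (k * Suc r + j) = (if j = r then Suc k else 0)"
      unfolding pP_def dm_lemma[OF j, of k] by simp
    then show "map (pP r) [k * Suc r..<k * Suc r + Suc r] ! j = (replicate r 0 @ [Suc k]) ! j"
      using j by (cases "j = r") (simp_all add: nth_append add.commute)
  qed simp
  moreover have Y: "[0..<Suc k * Suc r] = [0..<k * Suc r] @ [k * Suc r..<k * Suc r + Suc r]"
  proof -
    have e: "Suc k * Suc r = k * Suc r + Suc r" by simp
    show ?thesis unfolding e by (rule upt_add_eq_append) simp
  qed
  have u: "[1..<Suc k + 1] = [1..<k+1] @ [Suc k]" by simp
  show ?case unfolding u Y map_append concat_append Suc.IH X by simp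
qed

lemma Q_list: "concat (map (\<lambda>i. replicate r (i - 1) @ [i]) [1..<k+1]) = map (pQ r) [0..<k * Suc r]"
proof (induction k)
  case 0 then show ?case by simp
next
  case (Suc k)
  have X: "map (pQ r) [k * Suc r..<k * Suc r + Suc r] = replicate r k @ [Suc k]"
  proof (rule nth_equalityI)
    fix j assume "j < length (map (pQ r) [k * Suc r..<k * Suc r + Suc r])"
    then have j: "j < Suc r" by simp
    have "pQ r (k * Suc r + j) = (if j = r then Suc k else k)"
    proof (cases "j = r")
      case True
      then have e: "k * Suc r + j + 1 = Suc k * Suc r + 0" by simp
      show ?thesis unfolding pQ_def e dm_lemma(1)[of 0 "Suc r" "Suc k", OF zero_less_Suc] using True by simp
    next
      case False
      then have "j + 1 < Suc r" using j by simp
      then show ?thesis unfolding pQ_def add.assoc dm_lemma(1)[of "j+1" "Suc r" k, OF \<open>j + 1 < Suc r\<close>] using False by simp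
    qed
    then show "map (pQ r) [k * Suc r..<k * Suc r + Suc r] ! j = (replicate r k @ [Suc k]) ! j"
      using j by (cases "j = r") (simp_all add: nth_append add.commute)
  qed simp
  moreover have Y: "[0..<Suc k * Suc r] = [0..<k * Suc r] @ [k * Suc r..<k * Suc r + Suc r]"
  proof -
    have e: "Suc k * Suc r = k * Suc r + Suc r" by simp
    show ?thesis unfolding e by (rule upt_add_eq_append) simp
  qed
  have u: "[1..<Suc k + 1] = [1..<k+1] @ [Suc k]" by simp
  show ?case unfolding u Y map_append concat_append Suc.IH X by simp
qed

lemma pP_img: "pP r ` {..<k * Suc r} = {..<Suc k}" if "k \<ge> 1" "r \<ge> 1"
proof
  show "pP r ` {..<k * Suc r} \<subseteq> {..<Suc k}"
  proof
    fix x assume "x \<in> pP r ` {..<k * Suc r}"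
    then obtain q where q: "q < k * Suc r" "x = pP r q" by auto
    have "q div Suc r < k" using q(1) by (simp add: less_mult_imp_div_less)
    then show "x \<in> {..<Suc k}" using q by (auto simp: pP_def)
  qed
next
  show "{..<Suc k} \<subseteq> pP r ` {..<k * Suc r}"
  proof
    fix x assume "x \<in> {..<Suc k}"
    then have x: "x \<le> k" by simp
    show "x \<in> pP r ` {..<k * Suc r}"
    proof (cases x)
      case 0
      have "pP r 0 = 0" using that by (simp add: pP_def)
      moreover have "0 < k * Suc r" using that by simp
      ultimately show ?thesis using 0 by (metis image_eqI lessThan_iff)
    next
      case (Suc y)
      have "pP r (y * Suc r + r) = x" unfolding pP_def dm_lemma[of r "Suc r" y, OF lessI] using Suc by simp
      moreover have "y * Suc r + r < k * Suc r"
      proof -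
        have "Suc y * Suc r \<le> k * Suc r" using x Suc by (intro mult_le_mono1) simp
        then show ?thesis by simp
      qed
      ultimately show ?thesis by (metis image_eqI lessThan_iff)
    qed
  qed
qed

lemma pQ_img: "pQ r ` {..<k * Suc r} = {..<Suc k}" if "k \<ge> 1" "r \<ge> 1"
proof
  show "pQ r ` {..<k * Suc r} \<subseteq> {..<Suc k}"
  proof
    fix x assume "x \<in> pQ r ` {..<k * Suc r}"
    then obtain q where q: "q < k * Suc r" "x = pQ r q" by auto
    have "q + 1 \<le> k * Suc r" using q by simp
    then have "(q+1) div Suc r \<le> k * Suc r div Suc r" by (rule div_le_mono)
    also have "k * Suc r div Suc r = k" by (rule nonzero_mult_div_cancel_right) simp
    finally show "x \<in> {..<Suc k}" using q unfolding pQ_def by simp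
  qed
next
  show "{..<Suc k} \<subseteq> pQ r ` {..<k * Suc r}"
  proof
    fix x assume "x \<in> {..<Suc k}"
    then have x: "x \<le> k" by simp
    show "x \<in> pQ r ` {..<k * Suc r}"
    proof (cases x)
      case 0
      have "pQ r 0 = 0" using that by (simp add: pQ_def)
      moreover have "0 < k * Suc r" using that by simp
      ultimately show ?thesis using 0 by (metis image_eqI lessThan_iff)
    next
      case (Suc y)
      have e: "y * Suc r + r + 1 = Suc y * Suc r + 0" by simp
      have "pQ r (y * Suc r + r) = x" unfolding pQ_def e dm_lemma(1)[of 0 "Suc r" "Suc y", OF zero_less_Suc] using Suc by simp
      moreover have "y * Suc r + r < k * Suc r"
      proof -
        have "Suc y * Suc r \<le> k * Suc r" using x Suc by (intro mult_le_mono1) simp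
        then show ?thesis by simp
      qed
      ultimately show ?thesis by (metis image_eqI lessThan_iff)
    qed
  qed
qed

lemma Em_occ:
  assumes "pf ` {..<m} = {..<K}"
  shows "i \<in> Em (map pf [0..<m]) e \<longleftrightarrow> 1 \<le> i \<and> i - 1 + m \<le> length e \<and> occ pf m (\<lambda>j. e ! j) (i - 1)"
proof -
  have "reduct (take m (drop (i - 1) e)) = map pf [0..<m] \<longleftrightarrow> occ pf m (\<lambda>j. e ! j) (i - 1)"
    if "i - 1 + m \<le> length e"
    using red_iff[of "take m (drop (i - 1) e)" m pf K] that assms by (simp add: occ_def)
  then show ?thesis unfolding Em_def by auto
qed




lemma occ_lt: "occ p m w i \<Longrightarrow> a < m \<Longrightarrow> b < m \<Longrightarrow> p a < p b \<Longrightarrow> w (i+a) < w (i+b)"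
  unfolding occ_def by blast
lemma occ_le: "occ p m w i \<Longrightarrow> a < m \<Longrightarrow> b < m \<Longrightarrow> p a \<le> p b \<Longrightarrow> w (i+a) \<le> w (i+b)"
  unfolding occ_def by (meson not_less)
lemma occ_eq: "occ p m w i \<Longrightarrow> a < m \<Longrightarrow> b < m \<Longrightarrow> p a = p b \<Longrightarrow> w (i+a) = w (i+b)"
  by (metis occ_le le_antisym order_refl)
lemma occ_cong: "occ p m w i \<Longrightarrow> (\<And>a. a < m \<Longrightarrow> w' (i+a) = w (i+a)) \<Longrightarrow> occ p m w' i"
  unfolding occ_def by simp

lemma occ_via_h:
  assumes "\<And>a. a < m \<Longrightarrow> w (i+a) = h (p a)" "\<And>a. a < m \<Longrightarrow> p a \<le> S"
    "\<And>x y. x < y \<Longrightarrow> y \<le> S \<Longrightarrow> h x < h y"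
  shows "occ p m w i"
  unfolding occ_def
proof (intro allI impI)
  fix a b assume ab: "a < m" "b < m"
  have hm: "x \<le> S \<Longrightarrow> y \<le> S \<Longrightarrow> h x < h y \<longleftrightarrow> x < y" for x y
    using assms(3) by (metis linorder_neqE_nat order_less_asym)
  show "w (i + a) < w (i + b) \<longleftrightarrow> p a < p b" using assms(1,2) ab hm by simp
qed

lemma pP_at: assumes "c < Suc r" shows "pP r (K * Suc r + c) = (if c = r then K+1 else 0)"
  unfolding pP_def dm_lemma[OF assms] by simp
lemma pQ_at: "c < Suc r \<Longrightarrow> pQ r (K * Suc r + c) = (if c = r then K+1 else K)"
proof -
  assume c: "c < Suc r"
  show ?thesis
  proof (cases "c = r")
    case True
    then have e: "K * Suc r + c + 1 = Suc K * Suc r + 0" by simp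
    show ?thesis unfolding pQ_def e dm_lemma(1)[of 0 "Suc r" "Suc K", OF zero_less_Suc] using True by simp
  next
    case False
    then have "c + 1 < Suc r" using c by simp
    then show ?thesis unfolding pQ_def add.assoc dm_lemma(1)[of "c+1" "Suc r" K, OF \<open>c + 1 < Suc r\<close>] using False by simp
  qed
qed

lemma bnd1: "K < s \<Longrightarrow> c < Suc r \<Longrightarrow> K * Suc r + c < s * Suc r"
proof -
  assume "K < s" "c < Suc r"
  have "K * Suc r + c < Suc K * Suc r" using \<open>c < Suc r\<close> by simp
  also have "Suc K * Suc r \<le> s * Suc r" using \<open>K < s\<close> by (intro mult_le_mono1) simp
  finally show ?thesis .
qed
lemma bnd2: "K * Suc r + c < s * Suc r \<Longrightarrow> K < s"
proof -
  assume "K * Suc r + c < s * Suc r"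
  then have "K * Suc r < s * Suc r" by simp
  then show "K < s" by (metis mult_less_cancel2)
qed
lemma decomp: "d = (d div Suc r) * Suc r + d mod Suc r" "d mod Suc r < Suc r"
  by (rule div_mult_mod_eq[symmetric]) simp

lemma peak_off: "1 \<le> j \<Longrightarrow> j * Suc r - 1 = (j - 1) * Suc r + r"
  by (cases j) auto

locale pats =
  fixes r s :: nat
  assumes r1: "1 \<le> r" and s2: "2 \<le> s"
begin

abbreviation m where "m \<equiv> s * Suc r"
abbreviation R where "R \<equiv> Suc r"

lemma pP0: "pP r 0 = 0" using r1 by (simp add: pP_def)
lemma pQ0: "pQ r 0 = 0" using r1 by (simp add: pQ_def)

lemma OA:
  assumes o1: "occ (pP r) m e i" and o2: "occ (pP r) m e i'" and ii: "i < i'" "i' < i + m - 1"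
  shows "R dvd (i' - i)"
proof (rule ccontr)
  assume nd: "\<not> R dvd (i' - i)"
  define d where "d = i' - i"
  define K where "K = d div R"
  define t where "t = d mod R"
  have dK: "d = K * R + t" "t < R" unfolding K_def t_def using decomp by blast+
  have t0: "t \<noteq> 0" using nd unfolding t_def d_def by (metis dvd_eq_mod_eq_0)
  have dm: "d < m - 1" using ii unfolding d_def by simp
  have Ks: "K < s" using dK dm bnd2[of K r t s] by simp
  show False
  proof (cases "t = r")
    case True
    have d1: "d + 1 = Suc K * R + 0" using dK True by simp
    have "e (i + (d+1)) < e (i + d)"
    proof (rule occ_lt[OF o1])
      show "d + 1 < m" using dm by simp
      show "d < m" using dm by simp
      have a: "pP r (d+1) = 0" unfolding d1 pP_at[OF zero_less_Suc] using r1 by simp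
      have b: "pP r d = Suc K" unfolding dK(1) pP_at[OF dK(2)] using True by simp
      show "pP r (d + 1) < pP r d" using a b by simp
    qed
    moreover have "e (i' + 0) \<le> e (i' + 1)"
    proof (rule occ_le[OF o2])
      show "0 < m" "1 < m" using s2 by (simp_all add: less_le_trans[OF _ mult_le_mono1[OF s2]])
      show "pP r 0 \<le> pP r 1" using pP0 by simp
    qed
    ultimately show False using ii unfolding d_def by simp
  next
    case False
    then have tr: "t < r" using dK by simp
    have A1: "e (i' + 0) = e (i' + (r - t))"
    proof (rule occ_eq[OF o2])
      show "0 < m" using s2 by simp
      have "r - t < R" by simp
      then show "r - t < m" using bnd1[of 0 s "r - t" r] s2 by simp
      show "pP r 0 = pP r (r - t)" using pP0 pP_at[of "r - t" r 0] t0 tr by simp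
    qed
    have A2: "e (i + d) < e (i + (K * R + r))"
    proof (rule occ_lt[OF o1])
      show "d < m" using dm by simp
      show "K * R + r < m" using bnd1[OF Ks, of r r] by simp
      show "pP r d < pP r (K * R + r)" using pP_at[of t r K] pP_at[of r r K] dK tr by simp
    qed
    have x1: "i + d = i'" and x2: "i + (K * R + r) = i' + (r - t)" using ii dK tr unfolding d_def by simp_all
    have "e i' < e i'" using A2 A1 unfolding x1 x2 by simp
    then show False by simp
  qed
qed

lemma OB:
  assumes o1: "occ (pQ r) m e i" and o2: "occ (pQ r) m e i'" and ii: "i < i'" "i' < i + m - 1"
  shows "R dvd (i' - i)"
proof (rule ccontr)
  assume nd: "\<not> R dvd (i' - i)"
  define d where "d = i' - i"
  define K where "K = d div R"
  define t where "t = d mod R"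
  have dK: "d = K * R + t" "t < R" unfolding K_def t_def using decomp by blast+
  have t0: "t \<noteq> 0" using nd unfolding t_def d_def by (metis dvd_eq_mod_eq_0)
  have dm: "d < m - 1" using ii unfolding d_def by simp
  have Ks: "K < s" using dK dm bnd2[of K r t s] by simp
  show False
  proof (cases "t = r")
    case True
    have K2: "Suc K < s"
    proof -
      have "Suc K * R \<le> m - 1" using dK True dm by simp
      then have "Suc K * R < s * R" by simp
      then show ?thesis by (metis mult_less_cancel2)
    qed
    have dr: "d + r = Suc K * R + (r - 1)" using dK True r1 by simp
    have "e (i + d) = e (i + (d + r))"
    proof (rule occ_eq[OF o1])
      show "d < m" using dm by simp
      show "d + r < m" unfolding dr by (rule bnd1[OF K2]) simp
      have a: "pQ r d = Suc K" unfolding dK(1) pQ_at[OF dK(2)] using True by simp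
      have rr: "r - 1 < Suc r" by simp
      have b: "pQ r (d + r) = Suc K" unfolding dr pQ_at[OF rr] using r1 by simp
      show "pQ r d = pQ r (d + r)" using a b by simp
    qed
    moreover have "e (i' + 0) < e (i' + r)"
    proof (rule occ_lt[OF o2])
      show "0 < m" using s2 by simp
      show "r < m" using bnd1[of 0 s r r] s2 by simp
      show "pQ r 0 < pQ r r" using pQ0 pQ_at[of r r 0] by simp
    qed
    ultimately show False using ii unfolding d_def by simp
  next
    case False
    then have tr: "t < r" using dK by simp
    have A1: "e (i' + 0) = e (i' + (r - t))"
    proof (rule occ_eq[OF o2])
      show "0 < m" using s2 by simp
      have "r - t < R" by simp
      then show "r - t < m" using bnd1[of 0 s "r - t" r] s2 by simp
      show "pQ r 0 = pQ r (r - t)" using pQ0 pQ_at[of "r - t" r 0] t0 tr by simp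
    qed
    have A2: "e (i + d) < e (i + (K * R + r))"
    proof (rule occ_lt[OF o1])
      show "d < m" using dm by simp
      show "K * R + r < m" using bnd1[OF Ks, of r r] by simp
      show "pQ r d < pQ r (K * R + r)" using pQ_at[of t r K] pQ_at[of r r K] dK tr by simp
    qed
    have x1: "i + d = i'" and x2: "i + (K * R + r) = i' + (r - t)" using ii dK tr unfolding d_def by simp_all
    have "e i' < e i'" using A2 A1 unfolding x1 x2 by simp
    then show False by simp
  qed
qed

end



definition Mset :: "nat \<Rightarrow> nat \<Rightarrow> nat set \<Rightarrow> nat set" where
  "Mset r s T = {p. \<exists>i\<in>T. \<exists>q. p = i + q \<and> q < s * Suc r \<and> Suc r \<le> q \<and> q mod Suc r \<noteq> r}"

function phi :: "nat set \<Rightarrow> (nat \<Rightarrow> nat) \<Rightarrow> nat \<Rightarrow> nat" where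
  "phi M e p = (if p \<in> M \<and> 0 < p then phi M e (p - 1) else e p)"
  by auto
termination by (relation "measure (\<lambda>(M, e, p). p)") auto
declare phi.simps[simp del]

function psi :: "nat \<Rightarrow> nat set \<Rightarrow> (nat \<Rightarrow> nat) \<Rightarrow> nat \<Rightarrow> nat" where
  "psi R M e p = (if p \<in> M \<and> R \<le> p \<and> 0 < R then psi R M e (p - R) else e p)"
  by auto
termination by (relation "measure (\<lambda>(R, M, e, p). p)") auto
declare psi.simps[simp del]

lemma phi_out: "p \<notin> M \<Longrightarrow> phi M e p = e p" by (simp add: phi.simps)
lemma phi_in: "p \<in> M \<Longrightarrow> 0 < p \<Longrightarrow> phi M e p = phi M e (p - 1)" by (simp add: phi.simps)
lemma psi_out: "p \<notin> M \<Longrightarrow> psi R M e p = e p" by (simp add: psi.simps)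
lemma psi_in: "p \<in> M \<Longrightarrow> R \<le> p \<Longrightarrow> 0 < R \<Longrightarrow> psi R M e p = psi R M e (p - R)" by (simp add: psi.simps)

lemma phi_src: "\<exists>p'\<le>p. phi M e p = e p'"
proof (induction p rule: less_induct)
  case (less p)
  show ?case
  proof (cases "p \<in> M \<and> 0 < p")
    case True
    then obtain p' where "p' \<le> p - 1" "phi M e (p - 1) = e p'" using less by (metis diff_less zero_less_one)
    then show ?thesis using True phi_in[of p M e] by (metis diff_le_self le_trans)
  next
    case False
    then show ?thesis by (metis phi.simps order_refl)
  qed
qed

lemma psi_src: "\<exists>p'\<le>p. psi R M e p = e p'"
proof (induction p rule: less_induct)
  case (less p)
  show ?case
  proof (cases "p \<in> M \<and> R \<le> p \<and> 0 < R")
    case True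
    then obtain p' where "p' \<le> p - R" "psi R M e (p - R) = e p'" using less by (metis diff_less le_trans le0 less_le_trans)
    then show ?thesis using True psi_in[of p M R e] by (metis diff_le_self le_trans)
  next
    case False
    then show ?thesis by (metis psi.simps order_refl)
  qed
qed

lemma pQ_nonpeak: "a mod Suc r \<noteq> r \<Longrightarrow> pQ r a = a div Suc r"
  unfolding pQ_def using div_Suc[of a "Suc r"] mod_Suc[of a "Suc r"] by auto
lemma pP_nonpeak: "a mod Suc r \<noteq> r \<Longrightarrow> pP r a = 0"
  unfolding pP_def by simp
lemma peak_form: "a mod Suc r = r \<Longrightarrow> a = (a div Suc r) * Suc r + r"
  by (metis div_mult_mod_eq)
lemma pP_pk: "1 \<le> j \<Longrightarrow> pP r (j * Suc r - 1) = j"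
  unfolding peak_off using pP_at[of r r "j - 1"] by simp
lemma pQ_pk: "1 \<le> j \<Longrightarrow> pQ r (j * Suc r - 1) = j"
  unfolding peak_off using pQ_at[of r r "j - 1"] by simp
lemma pk_bnd: "1 \<le> j \<Longrightarrow> j \<le> s \<Longrightarrow> j * Suc r - 1 < s * Suc r"
proof -
  assume "1 \<le> j" "j \<le> s"
  have "j * Suc r \<le> s * Suc r" using \<open>j \<le> s\<close> by (rule mult_le_mono1)
  moreover have "0 < j * Suc r" using \<open>1 \<le> j\<close> by simp
  ultimately show ?thesis by linarith
qed

context pats
begin

lemma pP_le: "a < m \<Longrightarrow> pP r a \<le> s"
proof -
  assume "a < m"
  then have "pP r a \<in> pP r ` {..<m}" by simp
  then show ?thesis using pP_img[of s r] s2 r1 by simp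
qed
lemma pQ_le: "a < m \<Longrightarrow> pQ r a \<le> s"
proof -
  assume "a < m"
  then have "pQ r a \<in> pQ r ` {..<m}" by simp
  then show ?thesis using pQ_img[of s r] s2 r1 by simp
qed
lemma r_lt_m: "r < m" using bnd1[of 0 s r r] s2 by simp

definition ovl :: "nat set \<Rightarrow> bool" where
  "ovl T \<longleftrightarrow> (\<forall>i\<in>T. \<forall>i'\<in>T. i < i' \<and> i' < i + m - 1 \<longrightarrow> R dvd (i' - i))"

lemma m1: "m - 1 = (s - 1) * R + r" "(m - 1) mod R = r" "R < m - 1"
proof -
  show a: "m - 1 = (s - 1) * R + r" using peak_off[of s r] s2 by simp
  show "(m - 1) mod R = r" unfolding a using dm_lemma(2)[of r R "s - 1"] by simp
  have "2 * R \<le> m" using s2 by (intro mult_le_mono1)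
  then show "R < m - 1" using r1 by simp
qed

lemma Min: "i \<in> T \<Longrightarrow> q < m \<Longrightarrow> R \<le> q \<Longrightarrow> q mod R \<noteq> r \<Longrightarrow> i + q \<in> Mset r s T"
  unfolding Mset_def by blast

lemma dvd_mod: "R dvd d \<Longrightarrow> (d + a) mod R = a mod R"
  by (metis mod_add_left_eq dvd_imp_mod_0 add_0)

lemma N1:
  assumes ov: "ovl T" and i: "i \<in> T" and a: "a < m" "a mod R = r"
  shows "i + a \<notin> Mset r s T"
proof
  assume "i + a \<in> Mset r s T"
  then obtain i' q where q: "i' \<in> T" "i + a = i' + q" "q < m" "R \<le> q" "q mod R \<noteq> r"
    unfolding Mset_def by blast
  have ar: "r \<le> a" using a(2) by (metis mod_less_eq_dividend)
  consider "i' = i" | "i' < i" | "i < i'" by linarith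
  then show False
  proof cases
    case 1 then show False using q a by simp
  next
    case 2
    define d where "d = i - i'"
    have qd: "q = d + a" using q 2 unfolding d_def by simp
    show False
    proof (cases "d < m - 1")
      case True
      then have "R dvd d" using ov i q(1) 2 unfolding ovl_def d_def by auto
      then show False using dvd_mod[of d a] qd q(5) a(2) by simp
    next
      case False
      then show False using qd q(3) ar r1 by simp
    qed
  next
    case 3
    define d where "d = i' - i"
    have qd: "a = d + q" using q 3 unfolding d_def by simp
    show False
    proof (cases "d < m - 1")
      case True
      then have "R dvd d" using ov i q(1) 3 unfolding ovl_def d_def by auto
      then show False using dvd_mod[of d q] qd q(5) a(2) by simp
    next
      case False
      then show False using qd q(4) a(1) by simp
    qed
  qed
qed

lemma N2:
  assumes ov: "ovl T" and i: "i \<in> T" and iM: "i \<in> Mset r s T"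
  shows "\<exists>i'\<in>T. \<exists>k. i = i' + k * R \<and> 1 \<le> k \<and> k < s"
proof -
  obtain i' q where q: "i' \<in> T" "i = i' + q" "q < m" "R \<le> q" "q mod R \<noteq> r"
    using iM unfolding Mset_def by blast
  have "q \<noteq> m - 1" using q(5) m1(2) by auto
  then have "q < m - 1" using q(3) by simp
  then have "i' < i \<and> i < i' + m - 1" using q by simp
  then have "R dvd (i - i')" using ov q(1) i unfolding ovl_def by blast
  then have "R dvd q" using q(2) by simp
  then obtain k where k: "q = k * R" by (metis dvd_def mult.commute)
  have "1 \<le> k" using q(4) k by (cases k) auto
  moreover have "k < s" using q(3) k by (metis mult_less_cancel2)
  ultimately show ?thesis using q k by blast
qed

lemma N3:
  assumes ov: "ovl T" and i: "i \<in> T" and iM: "i \<in> Mset r s T" and a: "a < r"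
  shows "i + a \<in> Mset r s T"
proof -
  obtain i' k where k: "i' \<in> T" "i = i' + k * R" "1 \<le> k" "k < s" using N2[OF ov i iM] by blast
  have aR: "a < R" using a by simp
  have "i' + (k * R + a) \<in> Mset r s T"
  proof (rule Min[OF k(1)])
    show "k * R + a < m" using bnd1[OF k(4) aR] .
    have "1 * R \<le> k * R" by (rule mult_le_mono1) (use k(3) in simp)
    then show "R \<le> k * R + a" by simp
    show "(k * R + a) mod R \<noteq> r" using dm_lemma(2)[OF aR, of k] a by simp
  qed
  then show ?thesis using k(2) by (simp add: add.assoc)
qed

lemma N4:
  assumes ov: "ovl T" and i: "i \<in> T" and a: "a < r" and iaM: "i + a \<in> Mset r s T"
  shows "i \<in> Mset r s T"
proof -
  obtain i' q where q: "i' \<in> T" "i + a = i' + q" "q < m" "R \<le> q" "q mod R \<noteq> r"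
    using iaM unfolding Mset_def by blast
  consider "i' = i" | "i' < i" | "i < i'" by linarith
  then show ?thesis
  proof cases
    case 1 then show ?thesis using q a by simp
  next
    case 3
    define d where "d = i' - i"
    have "d < m - 1" using q 3 a m1(3) unfolding d_def by simp
    then have "R dvd d" using ov i q(1) 3 unfolding ovl_def d_def by auto
    moreover have "0 < d" "d < R" using q 3 a unfolding d_def by simp_all
    ultimately show ?thesis by (simp add: nat_dvd_not_less)
  next
    case 2
    define d where "d = i - i'"
    have qd: "q = d + a" using q 2 unfolding d_def by simp
    have dm: "d < m" using qd q(3) by simp
    show ?thesis
    proof (cases "d < m - 1")
      case True
      then have dv: "R dvd d" using ov i q(1) 2 unfolding ovl_def d_def by auto
      have "0 < d" using 2 unfolding d_def by simp
      then have "R \<le> d" using dv by (simp add: dvd_imp_le)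
      moreover have "d mod R \<noteq> r" using dv r1 by simp
      ultimately have "i' + d \<in> Mset r s T" using Min[OF q(1) dm] by simp
      then show ?thesis using 2 unfolding d_def by simp
    next
      case False
      then have "d = m - 1" "a = 0" using qd q(3) by simp_all
      then show ?thesis using qd q(5) m1(2) by simp
    qed
  qed
qed


lemma phiA_win:
  assumes ov: "ovl T" and occA: "\<forall>i\<in>T. occ (pP r) m e i"
  shows "i \<in> T \<Longrightarrow> (phi (Mset r s T) e i < e (i + r)) \<and>
     (\<forall>a<m. phi (Mset r s T) e (i + a) = (if pQ r a = 0 then phi (Mset r s T) e i else e (i + (pQ r a * R - 1))))"
proof (induction i rule: less_induct)
  case (less i)
  let ?M = "Mset r s T"
  let ?f = "phi ?M e"
  have oi: "occ (pP r) m e i" using occA less.prems by blast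
  have base: "?f i < e (i + r)"
  proof (cases "i \<in> ?M")
    case False
    then have "?f i = e (i + 0)" by (simp add: phi_out)
    also have "e (i + 0) < e (i + r)"
      using occ_lt[OF oi _ r_lt_m, of 0] s2 pP0 pP_at[of r r 0] by simp
    finally show ?thesis .
  next
    case True
    obtain i' k where k: "i' \<in> T" "i = i' + k * R" "1 \<le> k" "k < s" using N2[OF ov less.prems True] by blast
    have ii: "i' < i" using k by simp
    have IH: "\<forall>a<m. ?f (i' + a) = (if pQ r a = 0 then ?f i' else e (i' + (pQ r a * R - 1)))"
      using less.IH[OF ii k(1)] by blast
    have kb: "k * R - 1 < m" using pk_bnd[of k s r] k by simp
    have k1b: "(k+1) * R - 1 < m" using pk_bnd[of "k+1" s r] k by simp
    have "0 < i" using k by simp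
    then have "?f i = ?f (i - 1)" using phi_in[OF True] by simp
    also have "i - 1 = i' + (k * R - 1)" using k by simp
    also have "?f (i' + (k * R - 1)) = e (i' + (k * R - 1))"
    proof -
      have e1: "pQ r (k * R - 1) = k" by (rule pQ_pk[OF k(3)])
      have "k \<noteq> 0" using k(3) by simp
      then show ?thesis using IH[rule_format, OF kb] unfolding e1 by simp
    qed
    also have "e (i' + (k * R - 1)) < e (i' + ((k+1) * R - 1))"
    proof (rule occ_lt[OF _ kb k1b])
      show "occ (pP r) m e i'" using occA k(1) by blast
      show "pP r (k * R - 1) < pP r ((k + 1) * R - 1)" using pP_pk[OF k(3)] pP_pk[of "k+1" r] by simp
    qed
    also have "i' + ((k+1) * R - 1) = i + r" using k by simp
    finally show ?thesis .
  qed
  have win: "a < m \<Longrightarrow> ?f (i + a) = (if pQ r a = 0 then ?f i else e (i + (pQ r a * R - 1)))" for a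
  proof (induction a)
    case 0 then show ?case using pQ0 by simp
  next
    case (Suc a)
    show ?case
    proof (cases "Suc a mod R = r")
      case True
      have "i + Suc a \<notin> ?M" using N1[OF ov less.prems Suc.prems True] .
      then have "?f (i + Suc a) = e (i + Suc a)" by (simp add: phi_out)
      moreover have "pQ r (Suc a) = Suc (Suc a div R)"
      proof -
        have "pQ r (Suc a div R * R + r) = Suc (Suc a div R)" using pQ_at[of r r "Suc a div R"] by simp
        then show ?thesis using peak_form[OF True] by metis
      qed
      moreover have "Suc (Suc a div R) * R - 1 = Suc a" using peak_form[OF True] by simp
      ultimately show ?thesis by simp
    next
      case False
      have pq: "pQ r (Suc a) = pQ r a" using pQ_nonpeak[OF False] by (simp add: pQ_def)
      show ?thesis
      proof (cases "i + Suc a \<in> ?M")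
        case True
        then have "?f (i + Suc a) = ?f (i + a)" using phi_in[OF True] by simp
        then show ?thesis using Suc.IH Suc.prems pq by simp
      next
        case nM: False
        have "\<not> R \<le> Suc a" using Min[OF less.prems Suc.prems _ False] nM by blast
        then have ar: "Suc a < r" using False by simp
        have "?f (i + Suc a) = e (i + Suc a)" using nM by (simp add: phi_out)
        also have "e (i + Suc a) = e (i + 0)"
        proof (rule occ_eq[OF oi Suc.prems])
          show "0 < m" using s2 by simp
          show "pP r (Suc a) = pP r 0" using pP0 pP_nonpeak[OF False] by simp
        qed
        also have "e (i + 0) = ?f i"
        proof -
          have "i \<notin> ?M" using N3[OF ov less.prems _ ar] nM by auto
          then show ?thesis by (simp add: phi_out)
        qed
        finally show ?thesis using pQ_at[of "Suc a" r 0] ar by simp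
      qed
    qed
  qed
  show ?case using base win by blast
qed

lemma phiA:
  assumes ov: "ovl T" and occA: "\<forall>i\<in>T. occ (pP r) m e i" and i: "i \<in> T"
  shows "occ (pQ r) m (phi (Mset r s T) e) i"
proof -
  let ?f = "phi (Mset r s T) e"
  have oi: "occ (pP r) m e i" using occA i by blast
  note W = phiA_win[OF ov occA i]
  show ?thesis
  proof (rule occ_via_h[where h = "\<lambda>j. if j = 0 then ?f i else e (i + (j * R - 1))" and S = s])
    show "a < m \<Longrightarrow> ?f (i + a) = (if pQ r a = 0 then ?f i else e (i + (pQ r a * R - 1)))" for a
      using W by blast
    show "a < m \<Longrightarrow> pQ r a \<le> s" for a using pQ_le .
  next
    fix x y :: nat assume xy: "x < y" "y \<le> s"
    have y1: "1 \<le> y" using xy by simp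
    have yb: "y * R - 1 < m" using pk_bnd[OF y1 xy(2)] .
    show "(if x = 0 then ?f i else e (i + (x * R - 1))) < (if y = 0 then ?f i else e (i + (y * R - 1)))"
    proof (cases "x = 0")
      case True
      have "e (i + r) \<le> e (i + (y * R - 1))"
        using occ_le[OF oi r_lt_m yb] pP_at[of r r 0] pP_pk[OF y1] y1 by simp
      then show ?thesis using True W y1 by simp
    next
      case False
      then have x1: "1 \<le> x" by simp
      have "e (i + (x * R - 1)) < e (i + (y * R - 1))"
        using occ_lt[OF oi pk_bnd[OF x1] yb] pP_pk[OF x1] pP_pk[OF y1] xy by simp
      then show ?thesis using False y1 by simp
    qed
  qed
qed


lemma psiB_win:
  assumes ov: "ovl T" and occB: "\<forall>i\<in>T. occ (pQ r) m e i"
  shows "i \<in> T \<Longrightarrow> (psi R (Mset r s T) e i < e (i + r)) \<and>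
     (\<forall>a<m. a mod R \<noteq> r \<longrightarrow> psi R (Mset r s T) e (i + a) = psi R (Mset r s T) e i)"
proof (induction i rule: less_induct)
  case (less i)
  let ?M = "Mset r s T"
  let ?g = "psi R ?M e"
  have oi: "occ (pQ r) m e i" using occB less.prems by blast
  have iT: "i \<in> T" using less.prems .
  have bk: "i \<in> ?M \<Longrightarrow> \<exists>i'\<in>T. i' < i \<and> ?g i = ?g i' \<and> ?g i' < e (i' + r) \<and> (\<exists>k. i = i' + k * R \<and> 1 \<le> k \<and> k < s \<and>
      (\<forall>a<m. a mod R \<noteq> r \<longrightarrow> ?g (i' + a) = ?g i'))"
  proof -
    assume iM: "i \<in> ?M"
    obtain i' k where k: "i' \<in> T" "i = i' + k * R" "1 \<le> k" "k < s" using N2[OF ov less.prems iM] by blast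
    have ii: "i' < i" using k by simp
    have IH: "?g i' < e (i' + r)" "\<forall>a<m. a mod R \<noteq> r \<longrightarrow> ?g (i' + a) = ?g i'"
      using less.IH[OF ii k(1)] by blast+
    have Ri: "R \<le> i"
    proof -
      have "1 * R \<le> k * R" by (rule mult_le_mono1) (use k(3) in simp)
      then show ?thesis using k(2) by simp
    qed
    have "?g i = ?g (i - R)" using psi_in[OF iM Ri] by simp
    also have "i - R = i' + (k - 1) * R" using k by (cases k) auto
    also have "?g (i' + (k - 1) * R) = ?g i'"
    proof -
      have "(k - 1) * R + 0 < m" by (rule bnd1) (use k in auto)
      moreover have "((k - 1) * R) mod R \<noteq> r"
      proof -
        have "((k - 1) * R) mod R = 0" by (rule mod_mult_self2_is_0)
        then show ?thesis using r1 by simp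
      qed
      ultimately show ?thesis using IH(2) by simp
    qed
    finally show ?thesis using k ii IH by blast
  qed
  have base: "?g i < e (i + r)"
  proof (cases "i \<in> ?M")
    case False
    then have "?g i = e (i + 0)" by (simp add: psi_out)
    also have "e (i + 0) < e (i + r)"
      using occ_lt[OF oi _ r_lt_m, of 0] s2 pQ0 pQ_at[of r r 0] by simp
    finally show ?thesis .
  next
    case True
    obtain i' k where k: "i' \<in> T" "?g i = ?g i'" "?g i' < e (i' + r)" "i = i' + k * R" "1 \<le> k" "k < s"
      using bk[OF True] by blast
    have kb: "r < m" using r_lt_m .
    have k1b: "(k+1) * R - 1 < m" using pk_bnd[of "k+1" s r] k by simp
    have C: "e (i' + r) \<le> e (i' + ((k+1) * R - 1))"
    proof (rule occ_le[OF _ kb k1b])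
      show "occ (pQ r) m e i'" using occB k(1) by blast
      show "pQ r r \<le> pQ r ((k + 1) * R - 1)" using pQ_pk[of "k+1" r] pQ_at[of r r 0] by simp
    qed
    have D: "i' + ((k+1) * R - 1) = i + r" using k by simp
    have E: "e (i' + ((k+1) * R - 1)) = e (i + r)" using D by (rule arg_cong)
    show ?thesis using k(2,3) C E by (metis order.strict_trans2)
  qed
  have win: "a < m \<Longrightarrow> a mod R \<noteq> r \<Longrightarrow> ?g (i + a) = ?g i" for a
  proof (induction a rule: less_induct)
    case (less a)
    show ?case
    proof (cases "i + a \<in> ?M")
      case True
      show ?thesis
      proof (cases "R \<le> a")
        case True2: True
        have "?g (i + a) = ?g (i + a - R)" using psi_in[OF True] True2 by simp
        also have "i + a - R = i + (a - R)" using True2 by simp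
        also have "?g (i + (a - R)) = ?g i"
        proof (rule less.IH)
          show "a - R < a" "a - R < m" using True2 less.prems by auto
          show "(a - R) mod R \<noteq> r" using less.prems(2) True2 by (simp add: le_mod_geq)
        qed
        finally show ?thesis .
      next
        case False
        then have ar: "a < r" using less.prems(2) by simp
        have iM: "i \<in> ?M" using N4[OF ov iT ar True] .
        then obtain i' k where k: "i' \<in> T" "?g i = ?g i'" "i = i' + k * R" "1 \<le> k" "k < s"
          and W: "\<forall>a<m. a mod R \<noteq> r \<longrightarrow> ?g (i' + a) = ?g i'"
          using bk by blast
        have Ri: "R \<le> i + a"
        proof -
          have "1 * R \<le> k * R" by (rule mult_le_mono1) (use k(4) in simp)
          then show ?thesis using k(3) by simp
        qed
        have "?g (i + a) = ?g (i + a - R)" using psi_in[OF True Ri] by simp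
        also have "i + a - R = i' + ((k - 1) * R + a)" using k by (cases k) auto
        also have "?g (i' + ((k - 1) * R + a)) = ?g i'"
        proof -
          have aR: "a < R" using ar by simp
          have "(k - 1) * R + a < m" by (rule bnd1) (use k aR in auto)
          moreover have "((k - 1) * R + a) mod R \<noteq> r" using dm_lemma(2)[OF aR, of "k - 1"] ar by simp
          ultimately show ?thesis using W by simp
        qed
        finally show ?thesis using k by simp
      qed
    next
      case nM: False
      have "\<not> R \<le> a" using Min[OF iT less.prems(1) _ less.prems(2)] nM by blast
      then have ar: "a < r" using less.prems(2) by simp
      have "?g (i + a) = e (i + a)" using nM by (simp add: psi_out)
      also have "e (i + a) = e (i + 0)"
      proof (rule occ_eq[OF oi less.prems(1)])
        show "0 < m" using s2 by simp
        show "pQ r a = pQ r 0" using pQ0 pQ_at[of a r 0] ar by simp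
      qed
      also have "e (i + 0) = ?g i"
      proof -
        have "i \<notin> ?M" using N3[OF ov iT _ ar] nM by auto
        then show ?thesis by (simp add: psi_out)
      qed
      finally show ?thesis .
    qed
  qed
  show ?case using base win by blast
qed


lemma psiB:
  assumes ov: "ovl T" and occB: "\<forall>i\<in>T. occ (pQ r) m e i" and i: "i \<in> T"
  shows "occ (pP r) m (psi R (Mset r s T) e) i"
proof -
  let ?g = "psi R (Mset r s T) e"
  have oi: "occ (pQ r) m e i" using occB i by blast
  note W = psiB_win[OF ov occB i]
  show ?thesis
  proof (rule occ_via_h[where h = "\<lambda>j. if j = 0 then ?g i else e (i + (j * R - 1))" and S = s])
    fix a assume a: "a < m"
    show "?g (i + a) = (if pP r a = 0 then ?g i else e (i + (pP r a * R - 1)))"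
    proof (cases "a mod R = r")
      case True
      have "i + a \<notin> Mset r s T" using N1[OF ov i a True] .
      then have "?g (i + a) = e (i + a)" by (simp add: psi_out)
      moreover have "pP r a = Suc (a div R)" using True by (simp add: pP_def)
      moreover have "Suc (a div R) * R - 1 = a" using peak_form[OF True] by simp
      ultimately show ?thesis by simp
    next
      case False
      then show ?thesis using W a pP_nonpeak[OF False] by simp
    qed
    show "pP r a \<le> s" using pP_le[OF a] .
  next
    fix x y :: nat assume xy: "x < y" "y \<le> s"
    have y1: "1 \<le> y" using xy by simp
    have yb: "y * R - 1 < m" using pk_bnd[OF y1 xy(2)] .
    show "(if x = 0 then ?g i else e (i + (x * R - 1))) < (if y = 0 then ?g i else e (i + (y * R - 1)))"
    proof (cases "x = 0")
      case True
      have "e (i + r) \<le> e (i + (y * R - 1))"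
        using occ_le[OF oi r_lt_m yb] pQ_at[of r r 0] pQ_pk[OF y1] y1 by simp
      then show ?thesis using True W y1 by simp
    next
      case False
      then have x1: "1 \<le> x" by simp
      have "e (i + (x * R - 1)) < e (i + (y * R - 1))"
        using occ_lt[OF oi pk_bnd[OF x1] yb] pQ_pk[OF x1] pQ_pk[OF y1] xy by simp
      then show ?thesis using False y1 by simp
    qed
  qed
qed

lemma injA:
  assumes o1: "\<forall>i\<in>T. occ (pP r) m e1 i" and o2: "\<forall>i\<in>T. occ (pP r) m e2 i"
    and agree: "\<forall>p. p \<notin> Mset r s T \<longrightarrow> e1 p = e2 p"
  shows "e1 p = e2 p"
proof (induction p rule: less_induct)
  case (less p)
  show ?case
  proof (cases "p \<in> Mset r s T")
    case False then show ?thesis using agree by blast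
  next
    case True
    then obtain i q where q: "i \<in> T" "p = i + q" "q < m" "R \<le> q" "q mod R \<noteq> r"
      unfolding Mset_def by blast
    have qq: "(q - R) mod R \<noteq> r" using q by (simp add: le_mod_geq)
    have pq: "pP r q = pP r (q - R)" using pP_nonpeak[OF q(5)] pP_nonpeak[OF qq] by simp
    have "e1 (i + q) = e1 (i + (q - R))" using occ_eq[OF _ q(3) _ pq] o1 q by simp
    moreover have "e2 (i + q) = e2 (i + (q - R))" using occ_eq[OF _ q(3) _ pq] o2 q by simp
    moreover have "e1 (i + (q - R)) = e2 (i + (q - R))" using less.IH q by simp
    ultimately show ?thesis using q by simp
  qed
qed

lemma injB:
  assumes o1: "\<forall>i\<in>T. occ (pQ r) m e1 i" and o2: "\<forall>i\<in>T. occ (pQ r) m e2 i"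
    and agree: "\<forall>p. p \<notin> Mset r s T \<longrightarrow> e1 p = e2 p"
  shows "e1 p = e2 p"
proof (induction p rule: less_induct)
  case (less p)
  show ?case
  proof (cases "p \<in> Mset r s T")
    case False then show ?thesis using agree by blast
  next
    case True
    then obtain i q where q: "i \<in> T" "p = i + q" "q < m" "R \<le> q" "q mod R \<noteq> r"
      unfolding Mset_def by blast
    have pq: "pQ r q = pQ r (q - 1)" using pQ_nonpeak[OF q(5)] q(4) by (simp add: pQ_def)
    have "e1 (i + q) = e1 (i + (q - 1))" using occ_eq[OF _ q(3) _ pq] o1 q by simp
    moreover have "e2 (i + q) = e2 (i + (q - 1))" using occ_eq[OF _ q(3) _ pq] o2 q by simp
    moreover have "e1 (i + (q - 1)) = e2 (i + (q - 1))" using less.IH q by simp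
    ultimately show ?thesis using q by simp
  qed
qed

lemma ovlA: "\<forall>i\<in>T. occ (pP r) m e i \<Longrightarrow> ovl T"
  unfolding ovl_def using OA by blast
lemma ovlB: "\<forall>i\<in>T. occ (pQ r) m e i \<Longrightarrow> ovl T"
  unfolding ovl_def using OB by blast

end



lemma inv_len: "xs \<in> inv_seqs n \<Longrightarrow> length xs = n" by (simp add: inv_seqs_def)

lemma finite_inv: "finite (inv_seqs n)"
proof (rule finite_subset[OF _ finite_lists_length_eq[OF finite_lessThan[of n]]])
  show "inv_seqs n \<subseteq> {xs. set xs \<subseteq> {..<n} \<and> length xs = n}"
  proof
    fix xs assume xs: "xs \<in> inv_seqs n"
    have "set xs \<subseteq> {..<n}"
    proof
      fix x assume "x \<in> set xs"
      then obtain j where "j < length xs" "xs ! j = x" by (auto simp: in_set_conv_nth)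
      then show "x \<in> {..<n}" using xs unfolding inv_seqs_def by fastforce
    qed
    then show "xs \<in> {xs. set xs \<subseteq> {..<n} \<and> length xs = n}" using xs by (simp add: inv_seqs_def)
  qed
qed

lemma map_inv:
  assumes xs: "xs \<in> inv_seqs n" and src: "\<And>j. \<exists>j'\<le>j. F j = xs ! j'"
  shows "map F [0..<n] \<in> inv_seqs n"
  unfolding inv_seqs_def
proof (intro CollectI conjI allI impI)
  show "length (map F [0..<n]) = n" by simp
  fix j assume j: "j < n"
  obtain j' where "j' \<le> j" "F j = xs ! j'" using src by blast
  moreover have "xs ! j' < Suc j'" using xs j \<open>j' \<le> j\<close> unfolding inv_seqs_def by simp
  ultimately show "map F [0..<n] ! j < Suc j" using j by simp
qed

definition trunc :: "nat \<Rightarrow> nat list \<Rightarrow> nat \<Rightarrow> nat" where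
  "trunc n xs p = (if p < n then xs ! p else 0)"

lemma occ_trunc: "i + m \<le> n \<Longrightarrow> occ p m (trunc n xs) i \<longleftrightarrow> occ p m ((!) xs) i"
  unfolding occ_def trunc_def by auto

context pats
begin

definition SA :: "nat \<Rightarrow> nat set \<Rightarrow> nat list set" where
  "SA n T = {xs \<in> inv_seqs n. \<forall>i\<in>T. i + m \<le> n \<and> occ (pP r) m ((!) xs) i}"
definition SB :: "nat \<Rightarrow> nat set \<Rightarrow> nat list set" where
  "SB n T = {xs \<in> inv_seqs n. \<forall>i\<in>T. i + m \<le> n \<and> occ (pQ r) m ((!) xs) i}"

lemma card_AB: "card (SA n T) \<le> card (SB n T)"
proof -
  let ?M = "Mset r s T"
  let ?F = "\<lambda>xs. map (phi ?M ((!) xs)) [0..<n]"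
  have img: "?F ` SA n T \<subseteq> SB n T"
  proof
    fix ys assume "ys \<in> ?F ` SA n T"
    then obtain xs where xs: "xs \<in> SA n T" "ys = ?F xs" by blast
    have inv: "xs \<in> inv_seqs n" and oc: "\<forall>i\<in>T. i + m \<le> n \<and> occ (pP r) m ((!) xs) i"
      using xs unfolding SA_def by auto
    have ov: "ovl T" using ovlA oc by blast
    have "ys \<in> inv_seqs n" using map_inv[OF inv phi_src] xs by simp
    moreover have "\<forall>i\<in>T. i + m \<le> n \<and> occ (pQ r) m ((!) ys) i"
    proof
      fix i assume i: "i \<in> T"
      have "occ (pQ r) m (phi ?M ((!) xs)) i" using phiA[OF ov _ i] oc by blast
      moreover have "i + m \<le> n" using oc i by blast
      ultimately show "i + m \<le> n \<and> occ (pQ r) m ((!) ys) i"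
        using xs(2) by (auto intro: occ_cong)
    qed
    ultimately show "ys \<in> SB n T" unfolding SB_def by blast
  qed
  have inj: "inj_on ?F (SA n T)"
  proof
    fix x y assume x: "x \<in> SA n T" and y: "y \<in> SA n T" and eq: "?F x = ?F y"
    have lx: "length x = n" and ly: "length y = n" using x y unfolding SA_def inv_seqs_def by auto
    have ox: "\<forall>i\<in>T. occ (pP r) m (trunc n x) i" using x occ_trunc unfolding SA_def by blast
    have oy: "\<forall>i\<in>T. occ (pP r) m (trunc n y) i" using y occ_trunc unfolding SA_def by blast
    have ag: "\<forall>p. p \<notin> ?M \<longrightarrow> trunc n x p = trunc n y p"
    proof (intro allI impI)
      fix p assume p: "p \<notin> ?M"
      show "trunc n x p = trunc n y p"
      proof (cases "p < n")
        case True
        have "?F x ! p = ?F y ! p" using eq by (rule arg_cong)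
        then show ?thesis using True p by (simp add: trunc_def phi_out)
      qed (simp add: trunc_def)
    qed
    have "\<forall>p. trunc n x p = trunc n y p" using injA[OF ox oy ag] by blast
    then have "\<forall>p<n. x ! p = y ! p" unfolding trunc_def by (metis (full_types))
    then show "x = y" using lx ly by (intro nth_equalityI) auto
  qed
  have "finite (SB n T)" using finite_inv unfolding SB_def by simp
  then show ?thesis using card_inj_on_le[OF inj img] by blast
qed

lemma card_BA: "card (SB n T) \<le> card (SA n T)"
proof -
  let ?M = "Mset r s T"
  let ?F = "\<lambda>xs. map (psi R ?M ((!) xs)) [0..<n]"
  have img: "?F ` SB n T \<subseteq> SA n T"
  proof
    fix ys assume "ys \<in> ?F ` SB n T"
    then obtain xs where xs: "xs \<in> SB n T" "ys = ?F xs" by blast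
    have inv: "xs \<in> inv_seqs n" and oc: "\<forall>i\<in>T. i + m \<le> n \<and> occ (pQ r) m ((!) xs) i"
      using xs unfolding SB_def by auto
    have ov: "ovl T" using ovlB oc by blast
    have "ys \<in> inv_seqs n" using map_inv[OF inv psi_src] xs by simp
    moreover have "\<forall>i\<in>T. i + m \<le> n \<and> occ (pP r) m ((!) ys) i"
    proof
      fix i assume i: "i \<in> T"
      have "occ (pP r) m (psi R ?M ((!) xs)) i" using psiB[OF ov _ i] oc by blast
      moreover have "i + m \<le> n" using oc i by blast
      ultimately show "i + m \<le> n \<and> occ (pP r) m ((!) ys) i"
        using xs(2) by (auto intro: occ_cong)
    qed
    ultimately show "ys \<in> SA n T" unfolding SA_def by blast
  qed
  have inj: "inj_on ?F (SB n T)"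
  proof
    fix x y assume x: "x \<in> SB n T" and y: "y \<in> SB n T" and eq: "?F x = ?F y"
    have lx: "length x = n" and ly: "length y = n" using x y unfolding SB_def inv_seqs_def by auto
    have ox: "\<forall>i\<in>T. occ (pQ r) m (trunc n x) i" using x occ_trunc unfolding SB_def by blast
    have oy: "\<forall>i\<in>T. occ (pQ r) m (trunc n y) i" using y occ_trunc unfolding SB_def by blast
    have ag: "\<forall>p. p \<notin> ?M \<longrightarrow> trunc n x p = trunc n y p"
    proof (intro allI impI)
      fix p assume p: "p \<notin> ?M"
      show "trunc n x p = trunc n y p"
      proof (cases "p < n")
        case True
        have "?F x ! p = ?F y ! p" using eq by (rule arg_cong)
        then show ?thesis using True p by (simp add: trunc_def psi_out)
      qed (simp add: trunc_def)
    qed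
    have "\<forall>p. trunc n x p = trunc n y p" using injB[OF ox oy ag] by blast
    then have "\<forall>p<n. x ! p = y ! p" unfolding trunc_def by (metis (full_types))
    then show "x = y" using lx ly by (intro nth_equalityI) auto
  qed
  have "finite (SA n T)" using finite_inv unfolding SA_def by simp
  then show ?thesis using card_inj_on_le[OF inj img] by blast
qed


lemma Em_sub: "e \<in> inv_seqs n \<Longrightarrow> Em (map pf [0..<m]) e \<subseteq> {1..n}"
proof
  fix i assume e: "e \<in> inv_seqs n" and i: "i \<in> Em (map pf [0..<m]) e"
  have "1 \<le> m" using s2 by simp
  then show "i \<in> {1..n}" using i inv_len[OF e] unfolding Em_def by auto
qed

lemma G_eq: "card {e \<in> inv_seqs n. T \<subseteq> Em (map (pP r) [0..<m]) e} = card {e \<in> inv_seqs n. T \<subseteq> Em (map (pQ r) [0..<m]) e}"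
proof (cases "0 \<in> T")
  case True
  have e1: "{e \<in> inv_seqs n. T \<subseteq> Em (map (pP r) [0..<m]) e} = {}" using True unfolding Em_def by auto
  have e2: "{e \<in> inv_seqs n. T \<subseteq> Em (map (pQ r) [0..<m]) e} = {}" using True unfolding Em_def by auto
  show ?thesis unfolding e1 e2 by simp
next
  case False
  have iP: "pP r ` {..<m} = {..<Suc s}" using pP_img[of s r] s2 r1 by simp
  have iQ: "pQ r ` {..<m} = {..<Suc s}" using pQ_img[of s r] s2 r1 by simp
  have gen: "{e \<in> inv_seqs n. T \<subseteq> Em (map pf [0..<m]) e} = {e \<in> inv_seqs n. \<forall>i\<in>(\<lambda>i. i - 1) ` T. i + m \<le> n \<and> occ pf m ((!) e) i}"
    if im: "pf ` {..<m} = {..<Suc s}" for pf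
  proof (intro Collect_cong conj_cong refl)
    fix e assume e: "e \<in> inv_seqs n"
    have "T \<subseteq> Em (map pf [0..<m]) e \<longleftrightarrow> (\<forall>i\<in>T. 1 \<le> i \<and> i - 1 + m \<le> n \<and> occ pf m ((!) e) (i - 1))"
      using Em_occ[OF im, of _ e] inv_len[OF e] by blast
    also have "\<dots> \<longleftrightarrow> (\<forall>i\<in>T. i - 1 + m \<le> n \<and> occ pf m ((!) e) (i - 1))"
      using False by (metis One_nat_def Suc_leI neq0_conv)
    also have "\<dots> \<longleftrightarrow> (\<forall>i\<in>(\<lambda>i. i - 1) ` T. i + m \<le> n \<and> occ pf m ((!) e) i)" by blast
    finally show "T \<subseteq> Em (map pf [0..<m]) e \<longleftrightarrow> (\<forall>i\<in>(\<lambda>i. i - 1) ` T. i + m \<le> n \<and> occ pf m ((!) e) i)" .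
  qed
  have a: "{e \<in> inv_seqs n. T \<subseteq> Em (map (pP r) [0..<m]) e} = SA n ((\<lambda>i. i - 1) ` T)"
    unfolding SA_def by (rule gen[OF iP])
  have b: "{e \<in> inv_seqs n. T \<subseteq> Em (map (pQ r) [0..<m]) e} = SB n ((\<lambda>i. i - 1) ` T)"
    unfolding SB_def by (rule gen[OF iQ])
  show ?thesis unfolding a b using card_AB card_BA by (metis le_antisym)
qed

end

theorem mainTheorem6:
  fixes r s :: nat
  assumes "r \<ge> 1" and "s \<ge> 2"
  shows "super_strongly_wilf_equiv
           (concat (map (\<lambda>i. replicate r 0 @ [i]) [1..<s+1]))
           (concat (map (\<lambda>i. replicate r (i - 1) @ [i]) [1..<s+1]))"
proof -
  interpret pats r s using assms by unfold_locales
  have P: "concat (map (\<lambda>i. replicate r 0 @ [i]) [1..<s+1]) = map (pP r) [0..<s * Suc r]" by (rule P_list)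
  have Q: "concat (map (\<lambda>i. replicate r (i - 1) @ [i]) [1..<s+1]) = map (pQ r) [0..<s * Suc r]" by (rule Q_list)
  show ?thesis unfolding super_strongly_wilf_equiv_def P Q
  proof (intro allI impI)
    fix n T assume T: "T \<subseteq> {1..n::nat}"
    show "card {e \<in> inv_seqs n. Em (map (pP r) [0..<s * Suc r]) e = T} = card {e \<in> inv_seqs n. Em (map (pQ r) [0..<s * Suc r]) e = T}"
      by (rule moebius[OF finite_inv finite_atLeastAtMost _ _ G_eq T]) (use Em_sub in blast)+
  qed
qed


end
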